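(* Let $0<\Omega\le1/2$ and let $F\in\mathcal{F}_0$ be supported on a finite set $\Sigma\subset\mathbb{R}\setminus\{0\}$. Then in the noiseless setting $m=1$ sample suffices for exact recovery of the sparsity pattern of any vector from the source $\mathcal{X}(\Omega,F)$ (all of whose nonzero entries lie in $\Sigma$), and the noiseless sampling rate distortion function of $\mathcal{X}(\Omega,F)$ is $\rho_0(\alpha)=0$ for all $\alpha\in[0,1]$.
   Context: Setup. For each $n$, let $k=\lfloor \Omega n\rfloor$ and $m=\lceil \rho n\rceil$. For $\mathbf{x}\in\mathbb{R}^n$ its sparsity pattern is $\mathbf{s}=\{i: x_i\neq 0\}$. One observes $\mathbf{Y}=\mathbf{A}\mathbf{x}$ (noiseless setting), where $\mathbf{A}$ is a random $m\times n$ real matrix, independent of $\mathbf{x}$, with $\mathbb{E}[\mathrm{tr}(\mathbf{A}\mathbf{A}^T)]=m$. An estimator is any map $\hat{\mathbf{s}}(\mathbf{Y},\mathbf{A},k)$ returning a subset of $\{1,\dots,n\}$ of size $k$; it may use knowledge of the source. The distortion is $d(\mathbf{s},\hat{\mathbf{s}})=1-|\mathbf{s}\cap\hat{\mathbf{s}}|/|\mathbf{s}|$. A vector source is a collection of sequences $(\mathbf{x}^n)$, $\mathbf{x}^n\in\mathbb{R}^n$; $(\rho,\alpha)$ is achievable if for each $n$ there exist an estimator and a random $\lceil\rho n\rceil\times n$ sampling matrix such that for every sequence in the source $\Pr\{d(\mathbf{s}(\mathbf{x}^n),\hat{\mathbf{s}})>\alpha\}\to0$; $\rho_0(\alpha)$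 is the infimum of achievable $\rho\ge0$. $\mathcal{F}_0$ is the set of distribution functions $F$ of real random variables $X$ with $\mathbb{E}X^2<\infty$ and $\Pr\{X=0\}=0$. $\mathcal{X}(\Omega)$ is the set of sequences with $\mathbf{x}^n$ having exactly $\lfloor\Omega n\rfloor$ nonzero entries; $\mathcal{X}(\Omega,F)$ is the set of sequences in $\mathcal{X}(\Omega)$ for which $\sup_{x}|F_{\mathbf{x}^n}(x)-F(x)|\to0$, where $F_{\mathbf{x}^n}(x)=\frac1k\sum_{i\in\mathbf{s}}\mathbf{1}(x_i\le x)$ is the empirical distribution of the nonzero entries. *)

theory Defs
  imports "HOL-Probability.Probability"
begin

text \<open>Vectors in R^n are functions nat => real vanishing outside indices below n;
  m x n matrices are functions nat => nat => real (entries outside the range are zero).\<close>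

definition k_of :: "real \<Rightarrow> nat \<Rightarrow> nat" where
  "k_of Om n = nat \<lfloor>Om * real n\<rfloor>"

definition m_of :: "real \<Rightarrow> nat \<Rightarrow> nat" where
  "m_of rho n = nat \<lceil>rho * real n\<rceil>"

definition sparsity_pattern :: "nat \<Rightarrow> (nat \<Rightarrow> real) \<Rightarrow> nat set" where
  "sparsity_pattern n x = {i. i < n \<and> x i \<noteq> 0}"

definition mat_vec :: "nat \<Rightarrow> nat \<Rightarrow> (nat \<Rightarrow> nat \<Rightarrow> real) \<Rightarrow> (nat \<Rightarrow> real) \<Rightarrow> (nat \<Rightarrow> real)" where
  "mat_vec m n A x = (\<lambda>i. if i < m then (\<Sum>j<n. A i j * x j) else 0)"

definition distortion :: "nat set \<Rightarrow> nat set \<Rightarrow> real" where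
  "distortion s s' = 1 - real (card (s \<inter> s')) / real (card s)"

definition sampling_matrix :: "nat \<Rightarrow> nat \<Rightarrow> (nat \<Rightarrow> nat \<Rightarrow> real) measure \<Rightarrow> bool" where
  "sampling_matrix m n M \<longleftrightarrow>
     prob_space M \<and>
     space M \<subseteq> {A. \<forall>i j. (m \<le> i \<or> n \<le> j) \<longrightarrow> A i j = 0} \<and>
     (\<lambda>A. ennreal (\<Sum>i<m. \<Sum>j<n. (A i j)\<^sup>2)) \<in> borel_measurable M \<and>
     (\<integral>\<^sup>+ A. ennreal (\<Sum>i<m. \<Sum>j<n. (A i j)\<^sup>2) \<partial>M) = of_nat m"

definition valid_estimator ::
  "nat \<Rightarrow> nat \<Rightarrow> ((nat \<Rightarrow> real) \<Rightarrow> (nat \<Rightarrow> nat \<Rightarrow> real) \<Rightarrow> nat \<Rightarrow> nat set) \<Rightarrow> bool" where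
  "valid_estimator n k est \<longleftrightarrow> (\<forall>Y A. est Y A k \<subseteq> {..<n} \<and> card (est Y A k) = k)"

text \<open>Sources are sets of sequences (x^n), x^n in R^n.\<close>
definition achievable ::
  "real \<Rightarrow> (nat \<Rightarrow> nat \<Rightarrow> real) set \<Rightarrow> real \<Rightarrow> real \<Rightarrow> bool" where
  "achievable Om S rho \<alpha> \<longleftrightarrow>
     (\<exists>Ms ests. (\<forall>n. sampling_matrix (m_of rho n) n (Ms n) \<and>
                      valid_estimator n (k_of Om n) (ests n)) \<and>
       (\<forall>xs\<in>S.
          (\<forall>n. {A \<in> space (Ms n). distortion (sparsity_pattern n (xs n))
                 (ests n (mat_vec (m_of rho n) n A (xs n)) A (k_of Om n)) > \<alpha>} \<in> sets (Ms n)) \<and>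
          (\<lambda>n. measure (Ms n) {A \<in> space (Ms n). distortion (sparsity_pattern n (xs n))
                 (ests n (mat_vec (m_of rho n) n A (xs n)) A (k_of Om n)) > \<alpha>})
             \<longlonglongrightarrow> 0))"

definition rho0 :: "real \<Rightarrow> (nat \<Rightarrow> nat \<Rightarrow> real) set \<Rightarrow> real \<Rightarrow> real" where
  "rho0 Om S \<alpha> = Inf {rho. rho \<ge> 0 \<and> achievable Om S rho \<alpha>}"

definition F0 :: "(real \<Rightarrow> real) set" where
  "F0 = {F. \<exists>\<mu>. real_distribution \<mu> \<and> F = cdf \<mu> \<and>
              integrable \<mu> (\<lambda>x. x\<^sup>2) \<and> measure \<mu> {0} = 0}"

definition supported_on :: "(real \<Rightarrow> real) \<Rightarrow> real set \<Rightarrow> bool" where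
  "supported_on F Sig \<longleftrightarrow> (\<exists>\<mu>. real_distribution \<mu> \<and> F = cdf \<mu> \<and> measure \<mu> Sig = 1)"

definition source_X :: "real \<Rightarrow> (nat \<Rightarrow> nat \<Rightarrow> real) set" where
  "source_X Om = {xs. \<forall>n. (\<forall>i\<ge>n. xs n i = 0) \<and> card (sparsity_pattern n (xs n)) = k_of Om n}"

definition empirical_cdf :: "nat \<Rightarrow> (nat \<Rightarrow> real) \<Rightarrow> real \<Rightarrow> real" where
  "empirical_cdf n x t =
     real (card {i \<in> sparsity_pattern n x. x i \<le> t}) / real (card (sparsity_pattern n x))"

definition source_XF :: "real \<Rightarrow> (real \<Rightarrow> real) \<Rightarrow> (nat \<Rightarrow> nat \<Rightarrow> real) set" where
  "source_XF Om F = {xs \<in> source_X Om.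
     (\<lambda>n. SUP t. \<bar>empirical_cdf n (xs n) t - F t\<bar>) \<longlonglongrightarrow> 0}"

end

theory Submission imports Defs begin

definition Vset :: "real set \<Rightarrow> nat \<Rightarrow> (nat \<Rightarrow> real) set" where
  "Vset S n = {x. (\<forall>i\<ge>n. x i = 0) \<and> (\<forall>i. x i \<in> insert 0 S)}"

lemma finite_Vset: assumes "finite S" shows "finite (Vset S n)"
proof -
  have "Vset S n \<subseteq> (\<lambda>f i. if i < n then f i else 0) ` (PiE {..<n} (\<lambda>_. insert 0 S))"
  proof
    fix x assume x: "x \<in> Vset S n"
    have "x = (\<lambda>i. if i < n then restrict x {..<n} i else 0)"
      using x by (auto simp: Vset_def)
    moreover have "restrict x {..<n} \<in> PiE {..<n} (\<lambda>_. insert 0 S)"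
      using x by (auto simp: Vset_def)
    ultimately show "x \<in> (\<lambda>f i. if i < n then f i else 0) ` (PiE {..<n} (\<lambda>_. insert 0 S))"
      by blast
  qed
  moreover have "finite (PiE {..<n} (\<lambda>_. insert 0 S))"
    using assms by (intro finite_PiE) auto
  ultimately show ?thesis by (meson finite_imageI finite_subset)
qed

lemma inj_exists:
  assumes "finite S"
  shows "\<exists>a. (\<forall>i<n. a i \<noteq> 0) \<and> inj_on (\<lambda>x. \<Sum>i<n. a i * x i) (Vset S n)"
proof (induction n)
  case 0
  have "Vset S 0 = {\<lambda>_. 0}" by (auto simp: Vset_def)
  then show ?case by auto
next
  case (Suc n)
  then obtain a where a0: "\<forall>i<n. a i \<noteq> 0" and ainj: "inj_on (\<lambda>x. \<Sum>i<n. a i * x i) (Vset S n)"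
    by blast
  define L where "L = (\<lambda>x. \<Sum>i<n. a i * x i)"
  define T where "T = insert 0 S"
  define E where "E = insert 0 ((\<lambda>(x,y,s,t). (L y - L x) / (s - t)) ` (Vset S n \<times> Vset S n \<times> T \<times> T))"
  have "finite E" unfolding E_def T_def using finite_Vset[OF assms] assms by auto
  then obtain c where c: "c \<notin> E" using ex_new_if_finite[OF infinite_UNIV_char_0] by blast
  define a' where "a' = a(n := c)"
  have L': "(\<Sum>i<Suc n. a' i * x i) = L x + c * x n" for x
  proof -
    have "(\<Sum>i<n. a' i * x i) = L x" unfolding L_def a'_def by (intro sum.cong) auto
    then show ?thesis by (simp add: a'_def)
  qed
  have cut: "x(n := 0) \<in> Vset S n" if "x \<in> Vset S (Suc n)" for x
    using that by (auto simp: Vset_def)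
  have Lcut: "L (x(n := 0)) = L x" for x unfolding L_def by (intro sum.cong) auto
  have "inj_on (\<lambda>x. \<Sum>i<Suc n. a' i * x i) (Vset S (Suc n))"
  proof (rule inj_onI)
    fix x y assume x: "x \<in> Vset S (Suc n)" and y: "y \<in> Vset S (Suc n)"
      and eq: "(\<Sum>i<Suc n. a' i * x i) = (\<Sum>i<Suc n. a' i * y i)"
    then have eq': "L x + c * x n = L y + c * y n" by (simp only: L')
    show "x = y"
    proof (cases "x n = y n")
      case True
      then have "L (x(n:=0)) = L (y(n:=0))" using eq' Lcut by simp
      then have "x(n:=0) = y(n:=0)" using ainj cut[OF x] cut[OF y] unfolding L_def inj_on_def by blast
      then show ?thesis using True by (metis fun_upd_idem_iff fun_upd_upd)
    next
      case False
      have "c = (L (y(n:=0)) - L (x(n:=0))) / (x n - y n)"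
        using False eq' Lcut by (simp add: field_simps)
      moreover have "x n \<in> T" "y n \<in> T" using x y by (auto simp: Vset_def T_def)
      ultimately have "c \<in> E" unfolding E_def using cut[OF x] cut[OF y]
        by (intro insertI2 image_eqI[where x = "(x(n:=0), y(n:=0), x n, y n)"]) auto
      then show ?thesis using c by blast
    qed
  qed
  moreover have "\<forall>i<Suc n. a' i \<noteq> 0" using a0 c by (auto simp: a'_def E_def less_Suc_eq)
  ultimately show ?case by blast
qed

lemma norm_exists:
  assumes "finite S"
  shows "\<exists>a. (\<Sum>j<n. (a j)\<^sup>2) = (if n = 0 then 0 else 1) \<and> inj_on (\<lambda>x. \<Sum>j<n. a j * x j) (Vset S n)"
proof (cases "n = 0")
  case True
  have "Vset S 0 = {\<lambda>_. 0}" by (auto simp: Vset_def)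
  then show ?thesis using True by auto
next
  case False
  obtain a where a0: "\<forall>i<n. a i \<noteq> 0" and ainj: "inj_on (\<lambda>x. \<Sum>i<n. a i * x i) (Vset S n)"
    using inj_exists[OF assms] by blast
  define r where "r = (\<Sum>j<n. (a j)\<^sup>2)"
  have "(a 0)\<^sup>2 \<le> r" unfolding r_def using False
    by (intro member_le_sum) auto
  moreover have "(a 0)\<^sup>2 > 0" using a0 False by auto
  ultimately have rpos: "r > 0" by linarith
  define b where "b = (\<lambda>j. a j / sqrt r)"
  have "(\<Sum>j<n. (b j)\<^sup>2) = (\<Sum>j<n. (a j)\<^sup>2 / r)"
    unfolding b_def using rpos by (intro sum.cong) (auto simp: power_divide)
  also have "\<dots> = 1" using rpos by (simp add: sum_divide_distrib[symmetric] r_def)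
  finally have 1: "(\<Sum>j<n. (b j)\<^sup>2) = 1" .
  have L: "(\<Sum>j<n. b j * x j) = (\<Sum>j<n. a j * x j) / sqrt r" for x
    unfolding b_def by (simp add: sum_divide_distrib)
  have "inj_on (\<lambda>x. \<Sum>j<n. b j * x j) (Vset S n)"
    using ainj rpos unfolding inj_on_def L by auto
  then show ?thesis using 1 False by auto
qed

lemma construct:
  assumes "finite S" and "k \<le> n" and "n = 0 \<longrightarrow> m = 0"
  shows "\<exists>A0 est. sampling_matrix m n (return (count_space {A0}) A0) \<and> valid_estimator n k est \<and>
     (\<forall>x\<in>Vset S n. card (sparsity_pattern n x) = k \<longrightarrow> 1 \<le> m \<longrightarrow>
        est (mat_vec m n A0 x) A0 k = sparsity_pattern n x)"
proof -
  obtain a where asum: "(\<Sum>j<n. (a j)\<^sup>2) = (if n = 0 then 0 else 1)"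
    and ainj: "inj_on (\<lambda>x. \<Sum>j<n. a j * x j) (Vset S n)"
    using norm_exists[OF assms(1)] by blast
  define A0 where "A0 = (\<lambda>i j. if i < m \<and> j < n then a j else (0::real))"
  define P where "P = (\<lambda>Y x. x \<in> Vset S n \<and> card (sparsity_pattern n x) = k \<and> (\<Sum>j<n. a j * x j) = Y (0::nat))"
  define est where "est = (\<lambda>(Y::nat\<Rightarrow>real) (A::nat\<Rightarrow>nat\<Rightarrow>real) (k'::nat).
     if \<exists>x. P Y x then sparsity_pattern n (SOME x. P Y x) else {..<k})"
  have spsub: "sparsity_pattern n x \<subseteq> {..<n}" for x by (auto simp: sparsity_pattern_def)
  have valid: "valid_estimator n k est"
    unfolding valid_estimator_def
  proof (intro allI conjI)
    fix Y A
    show "est Y A k \<subseteq> {..<n}" using spsub assms(2) by (auto simp: est_def)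
    show "card (est Y A k) = k"
    proof (cases "\<exists>x. P Y x")
      case True
      then have "P Y (SOME x. P Y x)" by (rule someI_ex)
      then show ?thesis using True by (simp add: est_def P_def)
    qed (auto simp: est_def)
  qed
  let ?M = "return (count_space {A0}) A0"
  have sumA: "(\<Sum>i<m. \<Sum>j<n. (A0 i j)\<^sup>2) = real m"
  proof -
    have "(\<Sum>i<m. \<Sum>j<n. (A0 i j)\<^sup>2) = (\<Sum>i<m. \<Sum>j<n. (a j)\<^sup>2)"
      unfolding A0_def by (intro sum.cong) auto
    also have "\<dots> = real m" using asum assms(3) by auto
    finally show ?thesis .
  qed
  have samp: "sampling_matrix m n ?M"
    unfolding sampling_matrix_def
  proof (intro conjI)
    show "prob_space ?M" by (rule prob_space_return) simp
    show "space ?M \<subseteq> {A. \<forall>i j. (m \<le> i \<or> n \<le> j) \<longrightarrow> A i j = 0}" by (auto simp: A0_def)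
    show "(\<lambda>A. ennreal (\<Sum>i<m. \<Sum>j<n. (A i j)\<^sup>2)) \<in> borel_measurable ?M"
      by (simp add: measurable_cong_sets[OF sets_return refl])
    show "(\<integral>\<^sup>+ A. ennreal (\<Sum>i<m. \<Sum>j<n. (A i j)\<^sup>2) \<partial>?M) = of_nat m"
      by (subst nn_integral_return) (auto simp: sumA ennreal_of_nat_eq_real_of_nat)
  qed
  have corr: "est (mat_vec m n A0 x) A0 k = sparsity_pattern n x"
    if x: "x \<in> Vset S n" "card (sparsity_pattern n x) = k" and m: "1 \<le> m" for x
  proof -
    have Y0: "mat_vec m n A0 x 0 = (\<Sum>j<n. a j * x j)"
      using m unfolding mat_vec_def A0_def by auto
    then have Px: "P (mat_vec m n A0 x) x" using x by (simp add: P_def)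
    then have Ps: "P (mat_vec m n A0 x) (SOME y. P (mat_vec m n A0 x) y)"
      using someI[of "P (mat_vec m n A0 x)" x] by blast
    have "(SOME y. P (mat_vec m n A0 x) y) = x"
    proof (rule inj_onD[OF ainj])
      show "(\<Sum>j<n. a j * (SOME y. P (mat_vec m n A0 x) y) j) = (\<Sum>j<n. a j * x j)"
        using Ps Px unfolding P_def by simp
      show "(SOME y. P (mat_vec m n A0 x) y) \<in> Vset S n" using Ps unfolding P_def by blast
      show "x \<in> Vset S n" using x by blast
    qed
    then show ?thesis using Px by (auto simp: est_def)
  qed
  show ?thesis using samp valid corr by blast
qed

theorem proposition2:
  fixes Om :: real and F :: "real \<Rightarrow> real" and Sig :: "real set"
  assumes "0 < Om" and "Om \<le> 1/2"
    and "F \<in> F0" and "finite Sig" and "0 \<notin> Sig" and "supported_on F Sig"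
  shows "(\<forall>n\<ge>1. \<exists>M est. sampling_matrix 1 n M \<and> valid_estimator n (k_of Om n) est \<and>
            (\<forall>xs \<in> source_XF Om F \<inter> {xs. \<forall>n i. xs n i \<noteq> 0 \<longrightarrow> xs n i \<in> Sig}.
               AE A in M. est (mat_vec 1 n A (xs n)) A (k_of Om n) = sparsity_pattern n (xs n)))
       \<and> (\<forall>\<alpha>\<in>{0..1}. rho0 Om (source_XF Om F \<inter> {xs. \<forall>n i. xs n i \<noteq> 0 \<longrightarrow> xs n i \<in> Sig}) \<alpha> = 0)"
proof -
  let ?X = "source_XF Om F \<inter> {xs. \<forall>n i. xs n i \<noteq> 0 \<longrightarrow> xs n i \<in> Sig}"
  have kn: "k_of Om n \<le> n" for n
  proof -
    have "Om * real n \<le> real n" using assms(1,2) by (simp add: mult_left_le_one_le)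
    then show ?thesis unfolding k_of_def by (simp add: floor_le_iff nat_le_iff)
  qed
  have xsV: "xs n \<in> Vset Sig n \<and> card (sparsity_pattern n (xs n)) = k_of Om n" if "xs \<in> ?X" for xs n
    using that by (auto simp: source_XF_def source_X_def Vset_def)
  have part1: "\<forall>n\<ge>1. \<exists>M est. sampling_matrix 1 n M \<and> valid_estimator n (k_of Om n) est \<and>
            (\<forall>xs \<in> ?X. AE A in M. est (mat_vec 1 n A (xs n)) A (k_of Om n) = sparsity_pattern n (xs n))"
  proof (intro allI impI)
    fix n :: nat assume "1 \<le> n"
    then obtain A0 est where s: "sampling_matrix 1 n (return (count_space {A0}) A0)"
      and v: "valid_estimator n (k_of Om n) est"
      and c: "\<forall>x\<in>Vset Sig n. card (sparsity_pattern n x) = k_of Om n \<longrightarrow> 1 \<le> (1::nat) \<longrightarrow>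
        est (mat_vec 1 n A0 x) A0 (k_of Om n) = sparsity_pattern n x"
      using construct[OF assms(4) kn, of n 1] by auto
    have "\<forall>xs \<in> ?X. AE A in return (count_space {A0}) A0.
        est (mat_vec 1 n A (xs n)) A (k_of Om n) = sparsity_pattern n (xs n)"
    proof
      fix xs assume "xs \<in> ?X"
      then show "AE A in return (count_space {A0}) A0.
        est (mat_vec 1 n A (xs n)) A (k_of Om n) = sparsity_pattern n (xs n)"
        using c xsV by (intro AE_I2) auto
    qed
    then show "\<exists>M est. sampling_matrix 1 n M \<and> valid_estimator n (k_of Om n) est \<and>
            (\<forall>xs \<in> ?X. AE A in M. est (mat_vec 1 n A (xs n)) A (k_of Om n) = sparsity_pattern n (xs n))"
      using s v by blast
  qed
  have ach: "achievable Om ?X rho \<alpha>" if rho: "rho > 0" and al: "0 \<le> \<alpha>" for rho \<alpha>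
  proof -
    have m0: "n = 0 \<longrightarrow> m_of rho n = 0" for n by (simp add: m_of_def)
    define Q where "Q = (\<lambda>n A0 (est :: (nat \<Rightarrow> real) \<Rightarrow> (nat \<Rightarrow> nat \<Rightarrow> real) \<Rightarrow> nat \<Rightarrow> nat set).
      sampling_matrix (m_of rho n) n (return (count_space {A0}) A0) \<and>
        valid_estimator n (k_of Om n) est \<and>
     (\<forall>x\<in>Vset Sig n. card (sparsity_pattern n x) = k_of Om n \<longrightarrow> 1 \<le> m_of rho n \<longrightarrow>
        est (mat_vec (m_of rho n) n A0 x) A0 (k_of Om n) = sparsity_pattern n x))"
    have "\<forall>n. \<exists>A0 est. Q n A0 est"
      unfolding Q_def using construct[OF assms(4) kn m0] by blast
    then have "\<exists>A0s. \<forall>n. \<exists>est. Q n (A0s n) est" by (rule choice)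
    then obtain A0s where "\<forall>n. \<exists>est. Q n (A0s n) est" by blast
    then have "\<exists>ests. \<forall>n. Q n (A0s n) (ests n)" by (rule choice)
    then obtain ests where HQ: "\<forall>n. Q n (A0s n) (ests n)" by blast
    have H: "sampling_matrix (m_of rho n) n (return (count_space {A0s n}) (A0s n)) \<and>
        valid_estimator n (k_of Om n) (ests n) \<and>
     (\<forall>x\<in>Vset Sig n. card (sparsity_pattern n x) = k_of Om n \<longrightarrow> 1 \<le> m_of rho n \<longrightarrow>
        ests n (mat_vec (m_of rho n) n (A0s n) x) (A0s n) (k_of Om n) = sparsity_pattern n x)" for n
      using HQ unfolding Q_def by blast
    define Ms where "Ms = (\<lambda>n. return (count_space {A0s n}) (A0s n))"
    define N where "N = nat \<lceil>1 / Om\<rceil>"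
    have big: "1 \<le> k_of Om n \<and> 1 \<le> m_of rho n" if "N \<le> n" for n
    proof -
      have "1 / Om \<le> real n" using that unfolding N_def by linarith
      then have "1 \<le> Om * real n" using assms(1) by (simp add: field_simps)
      moreover have "0 < real n" using \<open>1 / Om \<le> real n\<close> assms(1)
        by (smt (verit) divide_pos_pos)
      then have "0 < rho * real n" using rho by simp
      then have "1 \<le> m_of rho n" unfolding m_of_def by linarith
      moreover have "1 \<le> k_of Om n" using \<open>1 \<le> Om * real n\<close> unfolding k_of_def by linarith
      ultimately show ?thesis by simp
    qed
    show ?thesis unfolding achievable_def
    proof (intro exI[of _ Ms] exI[of _ ests] conjI ballI allI)
      fix n show "sampling_matrix (m_of rho n) n (Ms n)" using H by (simp add: Ms_def)
      show "valid_estimator n (k_of Om n) (ests n)" using H by simp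
    next
      fix xs n assume "xs \<in> ?X"
      show "{A \<in> space (Ms n). \<alpha> < distortion (sparsity_pattern n (xs n))
                 (ests n (mat_vec (m_of rho n) n A (xs n)) A (k_of Om n))} \<in> sets (Ms n)"
        by (auto simp: Ms_def)
    next
      fix xs assume xs: "xs \<in> ?X"
      have "\<forall>\<^sub>F n in sequentially. measure (Ms n) {A \<in> space (Ms n). \<alpha> < distortion (sparsity_pattern n (xs n))
                 (ests n (mat_vec (m_of rho n) n A (xs n)) A (k_of Om n))} = 0"
        unfolding eventually_sequentially
      proof (intro exI[of _ N] allI impI)
        fix n assume "N \<le> n"
        then have b: "1 \<le> k_of Om n" "1 \<le> m_of rho n" using big by auto
        have e: "ests n (mat_vec (m_of rho n) n (A0s n) (xs n)) (A0s n) (k_of Om n) = sparsity_pattern n (xs n)"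
          using H[of n] xsV[OF xs, of n] b by auto
        have "distortion (sparsity_pattern n (xs n)) (sparsity_pattern n (xs n)) = 0"
          using xsV[OF xs, of n] b by (simp add: distortion_def)
        then have "{A \<in> space (Ms n). \<alpha> < distortion (sparsity_pattern n (xs n))
                 (ests n (mat_vec (m_of rho n) n A (xs n)) A (k_of Om n))} = {}"
          using e al by (auto simp: Ms_def)
        then show "measure (Ms n) {A \<in> space (Ms n). \<alpha> < distortion (sparsity_pattern n (xs n))
                 (ests n (mat_vec (m_of rho n) n A (xs n)) A (k_of Om n))} = 0" by (simp only: measure_empty)
      qed
      then show "(\<lambda>n. measure (Ms n) {A \<in> space (Ms n). \<alpha> < distortion (sparsity_pattern n (xs n))
                 (ests n (mat_vec (m_of rho n) n A (xs n)) A (k_of Om n))}) \<longlonglongrightarrow> 0"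
        by (rule tendsto_eventually)
    qed
  qed
  have part2: "rho0 Om ?X \<alpha> = 0" if "\<alpha> \<in> {0..1}" for \<alpha>
  proof -
    define S where "S = {rho. rho \<ge> 0 \<and> achievable Om ?X rho \<alpha>}"
    have inS: "r \<in> S" if "r > 0" for r using ach[of r \<alpha>] that \<open>\<alpha> \<in> {0..1}\<close> by (auto simp: S_def)
    have bdd: "bdd_below S" by (auto simp: S_def bdd_below_def)
    have ne: "S \<noteq> {}" using inS[of 1] by auto
    have ge: "0 \<le> Inf S" by (rule cInf_greatest[OF ne]) (auto simp: S_def)
    have "\<not> Inf S > 0"
    proof
      assume p: "Inf S > 0"
      then have "Inf S \<le> Inf S / 2" using cInf_lower[OF inS bdd, of "Inf S / 2"] by simp
      then show False using p by simp
    qed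
    then show ?thesis using ge by (simp add: rho0_def S_def)
  qed
  show ?thesis using part1 part2 by blast
qed

end
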